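(* Let $\mathcal{C}$ be a full SCW code with symbol set $\mathcal{S}=\{\eta_0,\dots,\eta_{L-1}\}$ and weight vector $\bar{\boldsymbol{\omega}}=[\bar\omega_0,\dots,\bar\omega_{L-1}]^{\mathsf T}$, with $K=\sum_{\ell}\bar\omega_\ell$. Fix any observation vector $\mathbf r\in\mathbb Z_{\ge 0}^K$. Then: (i) the set $\mathcal A(\mathbf r,\bar c_{\mathrm s},\bar c_{\mathrm n})=\arg\max_{\mathbf s\in\mathcal C} f_{\mathbf r}(\mathbf r\mid\bar{\mathbf c},\mathbf s)$ of coherent ML solutions is the same set $\mathcal A(\mathbf r)$ for every CSI $\bar{\mathbf c}=(\bar c_{\mathrm s},\bar c_{\mathrm n})\in(0,\infty)^2$, and for every probability density $f_{\bar{\mathbf c}}$ on $(0,\infty)^2$ the set of non-coherent ML solutions $\arg\max_{\mathbf s\in\mathcal C}\int\!\!\int f_{\mathbf r}(\mathbf r\mid\bar{\mathbf c},\mathbf s)f_{\bar{\mathbf c}}(\bar c_{\mathrm s},\bar c_{\mathrm n})\,\mathrm d\bar c_{\mathrm s}\,\mathrm d\bar c_{\mathrm n}$ equals the same set $\mathcal A(\mathbf r)$; in particular the ML solutions require neither instantaneous nor statistical CSI; (ii) for every permutation $\pi$ of $\{1,\dots,K\}$ with $r[\pi(1)]\le r[\pi(2)]\le\dots\le r[\pi(K)]$ (i.e., sorting $\mathbf r$ in ascending order with arbitrary tie-breaking), the sequence $\mathbf s$ defined by $s[\pi(j)]=\eta_\ell$ whenever $\sum_{\ell'<\ell}\bar\omega_{\ell'}<j\le\sum_{\ell'\le\ell}\bar\omega_{\ell'}$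 belongs to $\mathcal A(\mathbf r)$; (iii) in particular, for a full binary CW code with $\mathcal S=\{0,1\}$, length $K$ and weight $\omega$, any codeword whose $\omega$ entries equal to $1$ are located at the positions of $\omega$ largest entries of $\mathbf r$ belongs to $\mathcal A(\mathbf r)$.
   Context: Symbol set: $\mathcal S=\{\eta_0,\eta_1,\dots,\eta_{L-1}\}$ with $L\ge 2$, $0=\eta_0<\eta_1<\dots<\eta_{L-1}=1$. A codeword is $\mathbf s=[s[1],\dots,s[K]]^{\mathsf T}\in\mathcal S^K$. Channel model: given CSI $\bar{\mathbf c}=(\bar c_{\mathrm s},\bar c_{\mathrm n})$ with $\bar c_{\mathrm s}>0,\bar c_{\mathrm n}>0$, the observations $r[1],\dots,r[K]$ are independent with $r[k]$ Poisson of mean $s[k]\bar c_{\mathrm s}+\bar c_{\mathrm n}$, so the likelihood is $f_{\mathbf r}(\mathbf r\mid\bar{\mathbf c},\mathbf s)=\prod_{k=1}^K \frac{(\bar c_{\mathrm s}s[k]+\bar c_{\mathrm n})^{r[k]}e^{-\bar c_{\mathrm s}s[k]-\bar c_{\mathrm n}}}{r[k]!}$. An SCW (strongly constant-weight) code with weight vector $\bar{\boldsymbol\omega}\in\mathbb Z_{\ge0}^L$ is a codebook $\mathcal C\subseteq\mathcal S^K$, $K=\sum_\ell\bar\omega_\ell$, in which every codeword has exactly $\bar\omega_\ell$ entries equal to $\eta_\ell$ for each $\ell$; it is full if $\mathcal C$ contains all sequences in $\mathcal S^K$ with this property. A binary CW (constant-weight) code of length $K$ and weight $\omega$ is a codebook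 $\mathcal C\subseteq\{0,1\}^K$ in which every codeword has exactly $\omega$ ones; it is full if it contains all such sequences. *)

theory Defs
  imports "HOL-Analysis.Analysis"
begin

text \<open>Codewords are functions nat => real; the entries s 1, ..., s K are the
  symbols, entries outside 1..K are fixed to 0 (a normalisation convention).\<close>

definition code_length :: "nat \<Rightarrow> (nat \<Rightarrow> nat) \<Rightarrow> nat" where
  "code_length L w = (\<Sum>l<L. w l)"

definition full_SCW_code :: "(nat \<Rightarrow> real) \<Rightarrow> nat \<Rightarrow> (nat \<Rightarrow> nat) \<Rightarrow> (nat \<Rightarrow> real) set" where
  "full_SCW_code eta L w =
     {s. (\<forall>k. k \<notin> {1..code_length L w} \<longrightarrow> s k = 0)
       \<and> (\<forall>k\<in>{1..code_length L w}. s k \<in> eta ` {..<L})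
       \<and> (\<forall>l<L. card {k\<in>{1..code_length L w}. s k = eta l} = w l)}"

definition full_CW_code :: "nat \<Rightarrow> nat \<Rightarrow> (nat \<Rightarrow> real) set" where
  "full_CW_code K \<omega> =
     {s. (\<forall>k. k \<notin> {1..K} \<longrightarrow> s k = 0)
       \<and> (\<forall>k\<in>{1..K}. s k \<in> {0, 1})
       \<and> card {k\<in>{1..K}. s k = 1} = \<omega>}"

definition likelihood :: "nat \<Rightarrow> (nat \<Rightarrow> nat) \<Rightarrow> real \<Rightarrow> real \<Rightarrow> (nat \<Rightarrow> real) \<Rightarrow> real" where
  "likelihood K r cs cn s =
     (\<Prod>k\<in>{1..K}. (cs * s k + cn) ^ r k * exp (- cs * s k - cn) / fact (r k))"

definition argmax_set :: "'a set \<Rightarrow> ('a \<Rightarrow> real) \<Rightarrow> 'a set" where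
  "argmax_set C f = {s \<in> C. \<forall>s'\<in>C. f s' \<le> f s}"

definition pos_quadrant :: "(real \<times> real) set" where
  "pos_quadrant = {0<..} \<times> {0<..}"

definition pdf_pos_quadrant :: "(real \<times> real \<Rightarrow> real) \<Rightarrow> bool" where
  "pdf_pos_quadrant f \<longleftrightarrow>
     (\<forall>c\<in>pos_quadrant. 0 \<le> f c)
     \<and> set_integrable lborel pos_quadrant f
     \<and> (LINT c:pos_quadrant|lborel. f c) = 1"

definition nc_likelihood :: "nat \<Rightarrow> (nat \<Rightarrow> nat) \<Rightarrow> (real \<times> real \<Rightarrow> real) \<Rightarrow> (nat \<Rightarrow> real) \<Rightarrow> real" where
  "nc_likelihood K r f s =
     (LINT c:pos_quadrant|lborel. likelihood K r (fst c) (snd c) s * f c)"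

end

theory Submission
  imports Defs
begin


definition conc :: "nat set \<Rightarrow> (nat \<Rightarrow> real) \<Rightarrow> (nat \<Rightarrow> real) \<Rightarrow> bool" where
  "conc I r s \<longleftrightarrow> (\<forall>i\<in>I. \<forall>j\<in>I. r i < r j \<longrightarrow> s i \<le> s j)"

definition samecomp :: "nat set \<Rightarrow> (nat \<Rightarrow> real) \<Rightarrow> (nat \<Rightarrow> real) \<Rightarrow> bool" where
  "samecomp I s s' \<longleftrightarrow> (\<forall>\<phi>::real\<Rightarrow>real. (\<Sum>k\<in>I. \<phi> (s k)) = (\<Sum>k\<in>I. \<phi> (s' k)))"

definition swp :: "(nat \<Rightarrow> real) \<Rightarrow> nat \<Rightarrow> nat \<Rightarrow> nat \<Rightarrow> real" where
  "swp s i j = (\<lambda>k. if k = i then s j else if k = j then s i else s k)"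

definition Fs :: "nat set \<Rightarrow> (nat \<Rightarrow> real) \<Rightarrow> (real \<Rightarrow> real) \<Rightarrow> (real \<Rightarrow> real) \<Rightarrow> (nat \<Rightarrow> real)
    \<Rightarrow> (nat \<Rightarrow> real) \<Rightarrow> real" where
  "Fs I r g h c s = (\<Sum>k\<in>I. r k * g (s k) + h (s k) + c k)"

lemma swp_same[simp]: "swp s i i = s"
  by (auto simp: swp_def)

lemma sum_swp:
  fixes a :: "nat \<Rightarrow> real \<Rightarrow> real"
  assumes "finite I" "i \<in> I" "j \<in> I" "i \<noteq> j"
  shows "(\<Sum>k\<in>I. a k (swp s i j k)) = (\<Sum>k\<in>I. a k (s k)) - a i (s i) - a j (s j) + a i (s j) + a j (s i)"
proof -
  have jI: "j \<in> I - {i}" using assms by auto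
  have fin: "finite (I - {i})" using assms by auto
  have "(\<Sum>k\<in>I. a k (swp s i j k)) = a i (swp s i j i) + (\<Sum>k\<in>I - {i}. a k (swp s i j k))"
    using sum.remove[OF assms(1,2)] .
  also have "(\<Sum>k\<in>I - {i}. a k (swp s i j k)) = a j (swp s i j j) + (\<Sum>k\<in>I - {i} - {j}. a k (swp s i j k))"
    using sum.remove[OF fin jI] .
  also have "(\<Sum>k\<in>I - {i} - {j}. a k (swp s i j k)) = (\<Sum>k\<in>I - {i} - {j}. a k (s k))"
    by (rule sum.cong) (auto simp: swp_def)
  finally have 1: "(\<Sum>k\<in>I. a k (swp s i j k)) = a i (s j) + (a j (s i) + (\<Sum>k\<in>I - {i} - {j}. a k (s k)))"
    using assms by (simp add: swp_def)
  have "(\<Sum>k\<in>I. a k (s k)) = a i (s i) + (\<Sum>k\<in>I - {i}. a k (s k))"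
    using sum.remove[OF assms(1,2)] .
  also have "\<dots> = a i (s i) + (a j (s j) + (\<Sum>k\<in>I - {i} - {j}. a k (s k)))"
    using sum.remove[OF fin jI, of "\<lambda>k. a k (s k)"] by simp
  finally have "(\<Sum>k\<in>I. a k (s k)) = a i (s i) + (a j (s j) + (\<Sum>k\<in>I - {i} - {j}. a k (s k)))" .
  with 1 show ?thesis by linarith
qed

lemma samecomp_swp:
  assumes "finite I" "i \<in> I" "j \<in> I"
  shows "samecomp I s (swp s i j)"
  unfolding samecomp_def
proof
  fix \<phi> :: "real \<Rightarrow> real"
  show "(\<Sum>k\<in>I. \<phi> (s k)) = (\<Sum>k\<in>I. \<phi> (swp s i j k))"
  proof (cases "i = j")
    case False
    show ?thesis using sum_swp[OF assms False, of "\<lambda>k. \<phi>"] by simp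
  qed simp
qed

lemma samecomp_trans: "samecomp I s t \<Longrightarrow> samecomp I t u \<Longrightarrow> samecomp I s u"
  by (simp add: samecomp_def)

lemma samecomp_sym: "samecomp I s t \<Longrightarrow> samecomp I t s"
  by (simp add: samecomp_def)

lemma Fs_swp:
  assumes "finite I" "i \<in> I" "j \<in> I" "i \<noteq> j"
  shows "Fs I r g h c (swp s i j) = Fs I r g h c s + (r i - r j) * (g (s j) - g (s i))"
  unfolding Fs_def
  using sum_swp[OF assms, of "\<lambda>k x. r k * g x + h x + c k" s]
  by (simp add: algebra_simps)

lemma swap_gain:
  assumes "finite I" "i \<in> I" "j \<in> I" "r i < r j" "s j < s i"
    and "\<And>x y. x \<in> D \<Longrightarrow> y \<in> D \<Longrightarrow> x < y \<Longrightarrow> g x < g y"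
    and "s i \<in> D" "s j \<in> D"
  shows "Fs I r g h c s < Fs I r g h c (swp s i j)"
proof -
  have "i \<noteq> j" using assms by auto
  have "0 < (r j - r i) * (g (s i) - g (s j))"
    using assms by (intro mult_pos_pos) auto
  then show ?thesis using Fs_swp[OF assms(1-3) \<open>i \<noteq> j\<close>, of r g h c s]
    by (simp add: algebra_simps)
qed

lemma card_as_sum:
  assumes "finite I"
  shows "real (card {k\<in>I. P k}) = (\<Sum>k\<in>I. if P k then 1 else 0)"
  using sum.inter_filter[OF assms, of "\<lambda>_. (1::real)" P] by simp

lemma samecomp_cardP:
  assumes "finite I" "samecomp I s t"
  shows "card {k\<in>I. Q (s k)} = card {k\<in>I. Q (t k)}"
proof -
  have "(\<Sum>k\<in>I. (\<lambda>x. if Q x then 1 else 0) (s k)) = (\<Sum>k\<in>I. (\<lambda>x. if Q x then (1::real) else 0) (t k))"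
    using assms(2)[unfolded samecomp_def, rule_format, of "\<lambda>x. if Q x then (1::real) else 0"] by simp
  then have "real (card {k\<in>I. Q (s k)}) = real (card {k\<in>I. Q (t k)})"
    unfolding card_as_sum[OF assms(1)] by simp
  then show ?thesis by simp
qed

lemma samecomp_card:
  assumes "finite I" "samecomp I s t"
  shows "card {k\<in>I. s k = v} = card {k\<in>I. t k = v}"
  using samecomp_cardP[OF assms, of "\<lambda>x. x = v"] .

lemma rearr_le:
  assumes "finite I" "conc I r s" "samecomp I s t" "\<forall>k\<in>I. s k \<in> D" "\<forall>k\<in>I. t k \<in> D"
    and mono: "\<And>x y. x \<in> D \<Longrightarrow> y \<in> D \<Longrightarrow> x \<le> y \<Longrightarrow> g x \<le> g y"
  shows "Fs I r g h c t \<le> Fs I r g h c s"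
  using assms(1-5)
proof (induction "card I" arbitrary: I t)
  case 0
  then show ?case by (simp add: Fs_def)
next
  case (Suc n)
  then have ne: "I \<noteq> {}" by auto
  define M where "M = Max (s ` I)"
  have M: "\<forall>k\<in>I. s k \<le> M" using Suc.prems(1) by (auto simp: M_def)
  obtain k where k: "k \<in> I" "s k = M" unfolding M_def using Suc.prems(1) ne
    by (metis (no_types, lifting) Max_in empty_is_image finite_imageI imageE)
  obtain j0 where j0: "j0 \<in> I" "r j0 = Max (r ` I)" using Suc.prems(1) ne
    by (metis (no_types, lifting) Max_in empty_is_image finite_imageI imageE)
  have rj0: "\<forall>j\<in>I. r j \<le> r j0" using j0 Suc.prems(1) by auto
  obtain k0 where k0: "k0 \<in> I" "s k0 = M" "\<forall>j\<in>I. r j \<le> r k0"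
  proof (cases "r j0 \<le> r k")
    case True then show ?thesis using that[of k] k rj0 by force
  next
    case False
    then have "s k \<le> s j0" using Suc.prems(2) k j0 unfolding conc_def by auto
    then have "s j0 = M" using M j0 k by force
    then show ?thesis using that[of j0] j0 rj0 by auto
  qed
  have cM: "card {k\<in>I. t k = M} = card {k\<in>I. s k = M}"
    using samecomp_card[OF Suc.prems(1,3)] by simp
  have "{k\<in>I. s k = M} \<noteq> {}" using k0 by auto
  then have "card {k\<in>I. s k = M} > 0" using Suc.prems(1) by (simp add: card_gt_0_iff)
  then have "{k\<in>I. t k = M} \<noteq> {}" using cM by (metis card.empty less_irrefl)
  then obtain k1 where k1: "k1 \<in> I" "t k1 = M" by blast
  have cg: "card {k\<in>I. t k > M} = card {k\<in>I. s k > M}"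
    using samecomp_cardP[OF Suc.prems(1,3), of "\<lambda>x. x > M"] by simp
  have emp: "{k\<in>I. s k > M} = {}" using M by force
  have "card {k\<in>I. t k > M} = 0" using cg emp by (metis card.empty)
  then have "{k\<in>I. t k > M} = {}" using Suc.prems(1) by simp
  then have tM: "\<forall>k\<in>I. t k \<le> M" by force
  define u where "u = swp t k0 k1"
  have le1: "Fs I r g h c t \<le> Fs I r g h c u"
  proof (cases "k0 = k1")
    case True then show ?thesis by (simp add: u_def)
  next
    case False
    have "0 \<le> (r k0 - r k1) * (g (t k1) - g (t k0))"
      using k0 k1 tM Suc.prems(5) by (intro mult_nonneg_nonneg) (auto intro!: mono)
    then show ?thesis unfolding u_def using Fs_swp[OF Suc.prems(1) k0(1) k1(1) False] by simp
  qed
  have uk0: "u k0 = M" using k1 by (simp add: u_def swp_def)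
  have su: "samecomp I s u"
    using samecomp_trans[OF Suc.prems(3) samecomp_swp[OF Suc.prems(1) k0(1) k1(1)]] by (simp add: u_def)
  let ?J = "I - {k0}"
  have finJ: "finite ?J" using Suc.prems(1) by simp
  have cJ: "n = card ?J" using Suc.hyps(2) k0(1) Suc.prems(1) by simp
  have suJ: "samecomp ?J s u"
    unfolding samecomp_def
  proof
    fix \<phi> :: "real \<Rightarrow> real"
    have "(\<Sum>k\<in>I. \<phi> (s k)) = (\<Sum>k\<in>I. \<phi> (u k))" using su by (simp add: samecomp_def)
    then show "(\<Sum>k\<in>?J. \<phi> (s k)) = (\<Sum>k\<in>?J. \<phi> (u k))"
      using sum.remove[OF Suc.prems(1) k0(1), of "\<lambda>k. \<phi> (s k)"]
        sum.remove[OF Suc.prems(1) k0(1), of "\<lambda>k. \<phi> (u k)"] uk0 k0(2) by simp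
  qed
  have concJ: "conc ?J r s" using Suc.prems(2) by (auto simp: conc_def)
  have uD: "\<forall>k\<in>?J. u k \<in> D" using Suc.prems(5) k0(1) k1(1) by (auto simp: u_def swp_def)
  have IH: "Fs ?J r g h c u \<le> Fs ?J r g h c s"
    using Suc.hyps(1)[OF cJ finJ concJ suJ] Suc.prems(4) uD by auto
  have "Fs I r g h c u = r k0 * g M + h M + c k0 + Fs ?J r g h c u"
    unfolding Fs_def using sum.remove[OF Suc.prems(1) k0(1), of "\<lambda>k. r k * g (u k) + h (u k) + c k"] uk0 by simp
  moreover have "Fs I r g h c s = r k0 * g M + h M + c k0 + Fs ?J r g h c s"
    unfolding Fs_def using sum.remove[OF Suc.prems(1) k0(1), of "\<lambda>k. r k * g (s k) + h (s k) + c k"] k0(2) by simp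
  ultimately show ?case using le1 IH by linarith
qed



lemma pow_fact_le_exp:
  fixes y :: real assumes "0 \<le> y"
  shows "y ^ n / fact n \<le> exp y"
proof -
  have sm: "(\<lambda>m. y ^ m /\<^sub>R fact m) sums exp y" by (rule exp_converges)
  have "(\<Sum>m\<in>{n}. y ^ m /\<^sub>R fact m) \<le> (\<Sum>m. y ^ m /\<^sub>R fact m)"
    using assms by (intro sum_le_suminf sums_summable[OF sm]) auto
  then show ?thesis using sums_unique[OF sm] by (simp add: divide_inverse_commute)
qed

lemma lik_factor_bound:
  fixes y :: real assumes "0 \<le> y"
  shows "0 \<le> y ^ n * exp (- y) / fact n \<and> y ^ n * exp (- y) / fact n \<le> 1"
proof
  show "0 \<le> y ^ n * exp (- y) / fact n" using assms by simp
  have "y ^ n / fact n * exp (- y) \<le> exp y * exp (- y)"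
    using pow_fact_le_exp[OF assms, of n] by (intro mult_right_mono) auto
  then show "y ^ n * exp (- y) / fact n \<le> 1" by (simp add: exp_minus field_simps)
qed

lemma lik_bound:
  assumes "0 \<le> cs" "0 \<le> cn" "\<forall>k\<in>{1..K}. 0 \<le> s k"
  shows "0 \<le> likelihood K r cs cn s \<and> likelihood K r cs cn s \<le> 1"
proof -
  have b: "0 \<le> (cs * s k + cn) ^ r k * exp (- cs * s k - cn) / fact (r k) \<and>
      (cs * s k + cn) ^ r k * exp (- cs * s k - cn) / fact (r k) \<le> 1" if "k \<in> {1..K}" for k
  proof -
    have nn: "0 \<le> cs * s k + cn" using assms that by simp
    have e: "- cs * s k - cn = - (cs * s k + cn)" by simp
    show ?thesis unfolding e using lik_factor_bound[OF nn, of "r k"] .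
  qed
  show ?thesis unfolding likelihood_def
    using b by (auto intro!: prod_nonneg prod_le_1)
qed

lemma lik_Fs:
  assumes "0 < cs" "0 < cn" "\<forall>k\<in>{1..K}. 0 \<le> s k"
  shows "likelihood K r cs cn s = exp (Fs {1..K} (\<lambda>k. real (r k)) (\<lambda>x. ln (cs * x + cn))
            (\<lambda>x. - cs * x - cn) (\<lambda>k. - ln (fact (r k))) s)"
  unfolding likelihood_def Fs_def exp_sum[OF finite_atLeastAtMost]
proof (rule prod.cong[OF refl])
  fix k assume k: "k \<in> {1..K}"
  have y: "0 < cs * s k + cn" using assms k by (simp add: add_nonneg_pos)
  have "exp (real (r k) * ln (cs * s k + cn) + (- cs * s k - cn) + - ln (fact (r k)))
       = exp (ln (cs * s k + cn)) ^ r k * exp (- cs * s k - cn) * exp (- ln (fact (r k)))"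
    by (simp add: exp_add exp_diff exp_minus exp_of_nat_mult field_simps)
  also have "\<dots> = (cs * s k + cn) ^ r k * exp (- cs * s k - cn) / fact (r k)"
    using y by (simp add: exp_minus divide_inverse)
  finally show "(cs * s k + cn) ^ r k * exp (- cs * s k - cn) / fact (r k) =
    exp (real (r k) * ln (cs * s k + cn) + (- cs * s k - cn) + - ln (fact (r k)))" by simp
qed

lemma lik_le:
  assumes "0 < cs" "0 < cn" "\<forall>k\<in>{1..K}. 0 \<le> s k" "\<forall>k\<in>{1..K}. 0 \<le> t k"
    and "conc {1..K} (\<lambda>k. real (r k)) s" "samecomp {1..K} s t"
  shows "likelihood K r cs cn t \<le> likelihood K r cs cn s"
proof -
  have "Fs {1..K} (\<lambda>k. real (r k)) (\<lambda>x. ln (cs * x + cn)) (\<lambda>x. - cs * x - cn) (\<lambda>k. - ln (fact (r k))) t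
     \<le> Fs {1..K} (\<lambda>k. real (r k)) (\<lambda>x. ln (cs * x + cn)) (\<lambda>x. - cs * x - cn) (\<lambda>k. - ln (fact (r k))) s"
  proof (rule rearr_le[where D = "{0..}"])
    show "\<forall>k\<in>{1..K}. s k \<in> {0..}" "\<forall>k\<in>{1..K}. t k \<in> {0..}" using assms by auto
    fix x y :: real assume "x \<in> {0..}" "y \<in> {0..}" "x \<le> y"
    then show "ln (cs * x + cn) \<le> ln (cs * y + cn)"
      using assms(1,2) by (subst ln_le_cancel_iff) (auto intro: add_nonneg_pos mult_left_mono)
  qed (use assms in auto)
  then show ?thesis using lik_Fs[OF assms(1,2,3)] lik_Fs[OF assms(1,2,4)] by simp
qed

lemma not_conc:
  assumes "\<not> conc I r t"
  shows "\<exists>i\<in>I. \<exists>j\<in>I. r i < r j \<and> t j < t i"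
  using assms unfolding conc_def by force

lemma lik_lt:
  assumes "0 < cs" "0 < cn" "\<forall>k\<in>{1..K}. 0 \<le> t k"
    and "i \<in> {1..K}" "j \<in> {1..K}" "real (r i) < real (r j)" "t j < t i"
  shows "likelihood K r cs cn t < likelihood K r cs cn (swp t i j)"
proof -
  have t2: "\<forall>k\<in>{1..K}. 0 \<le> swp t i j k" using assms(3-5) by (auto simp: swp_def)
  have "Fs {1..K} (\<lambda>k. real (r k)) (\<lambda>x. ln (cs * x + cn)) (\<lambda>x. - cs * x - cn) (\<lambda>k. - ln (fact (r k))) t
     < Fs {1..K} (\<lambda>k. real (r k)) (\<lambda>x. ln (cs * x + cn)) (\<lambda>x. - cs * x - cn) (\<lambda>k. - ln (fact (r k))) (swp t i j)"
  proof (rule swap_gain[where D = "{0..}"])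
    fix x y :: real assume "x \<in> {0..}" "y \<in> {0..}" "x < y"
    then show "ln (cs * x + cn) < ln (cs * y + cn)"
      using assms(1,2) by (subst ln_less_cancel_iff) (auto intro: add_nonneg_pos)
  qed (use assms in auto)
  then show ?thesis using lik_Fs[OF assms(1,2,3)] lik_Fs[OF assms(1,2) t2] by simp
qed



lemma Q_iff: "c \<in> pos_quadrant \<longleftrightarrow> 0 < fst c \<and> 0 < snd c"
  by (cases c) (auto simp: pos_quadrant_def)

lemma lik_meas: "(\<lambda>c. likelihood K r (fst c) (snd c) s) \<in> borel_measurable lborel"
proof -
  have "continuous_on UNIV (\<lambda>c::real\<times>real. likelihood K r (fst c) (snd c) s)"
    unfolding likelihood_def by (intro continuous_intros) auto
  then have "(\<lambda>c::real\<times>real. likelihood K r (fst c) (snd c) s) \<in> borel_measurable borel"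
    by (rule borel_measurable_continuous_onI)
  then show ?thesis by simp
qed

lemma int_lik:
  assumes "pdf_pos_quadrant f" "\<forall>k\<in>{1..K}. 0 \<le> s k"
  shows "set_integrable lborel pos_quadrant (\<lambda>c. likelihood K r (fst c) (snd c) s * f c)"
proof -
  have fi: "integrable lborel (\<lambda>c. indicator pos_quadrant c *\<^sub>R f c)"
    using assms(1) unfolding pdf_pos_quadrant_def set_integrable_def by auto
  then have fm: "(\<lambda>c. indicator pos_quadrant c *\<^sub>R f c) \<in> borel_measurable lborel" by auto
  have "(\<lambda>c. likelihood K r (fst c) (snd c) s * (indicator pos_quadrant c *\<^sub>R f c)) \<in> borel_measurable lborel"
    using lik_meas fm by (rule borel_measurable_times)
  then have m: "(\<lambda>c. indicator pos_quadrant c *\<^sub>R (likelihood K r (fst c) (snd c) s * f c)) \<in> borel_measurable lborel"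
    by (simp add: mult.left_commute)
  show ?thesis unfolding set_integrable_def
  proof (rule Bochner_Integration.integrable_bound[OF fi m], rule AE_I2)
    fix c :: "real \<times> real"
    show "norm (indicator pos_quadrant c *\<^sub>R (likelihood K r (fst c) (snd c) s * f c))
        \<le> norm (indicator pos_quadrant c *\<^sub>R f c)"
    proof (cases "c \<in> pos_quadrant")
      case True
      then have b: "0 \<le> likelihood K r (fst c) (snd c) s \<and> likelihood K r (fst c) (snd c) s \<le> 1"
        using assms(2) by (intro lik_bound) (auto simp: Q_iff)
      have "\<bar>likelihood K r (fst c) (snd c) s * f c\<bar> \<le> \<bar>f c\<bar>"
        using b by (simp add: abs_mult mult_left_le_one_le)
      then show ?thesis using True by simp
    qed simp
  qed
qed

lemma strict_pos:
  assumes "pdf_pos_quadrant f" "set_integrable lborel pos_quadrant (\<lambda>c. d c * f c)"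
    and "\<forall>c\<in>pos_quadrant. 0 < d c"
  shows "0 < (LINT c:pos_quadrant|lborel. d c * f c)"
proof -
  have fnn: "\<forall>c\<in>pos_quadrant. 0 \<le> f c" and fi: "set_integrable lborel pos_quadrant f"
    and f1: "(LINT c:pos_quadrant|lborel. f c) = 1"
    using assms(1) unfolding pdf_pos_quadrant_def by auto
  let ?g = "\<lambda>c. indicator pos_quadrant c *\<^sub>R (d c * f c)"
  have gi: "integrable lborel ?g" using assms(2) unfolding set_integrable_def .
  have gnn: "\<forall>c. 0 \<le> ?g c"
  proof
    fix c show "0 \<le> ?g c"
    proof (cases "c \<in> pos_quadrant")
      case True
      then have "0 \<le> d c" "0 \<le> f c" using fnn assms(3) by (auto intro: less_imp_le)
      then show ?thesis using True by simp
    qed simp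
  qed
  have ge: "0 \<le> integral\<^sup>L lborel ?g" using gnn by (intro integral_nonneg_AE) auto
  show ?thesis
  proof (rule ccontr)
    assume "\<not> ?thesis"
    then have "integral\<^sup>L lborel ?g = 0" using ge unfolding set_lebesgue_integral_def by simp
    moreover have "AE c in lborel. 0 \<le> ?g c" using gnn by (intro AE_I2) blast
    ultimately have "AE c in lborel. ?g c = 0" using integral_nonneg_eq_0_iff_AE[OF gi] by blast
    then have ae: "AE c in lborel. indicator pos_quadrant c *\<^sub>R f c = 0"
    proof (rule AE_mp, intro AE_I2 impI)
      fix c assume "?g c = 0"
      then show "indicator pos_quadrant c *\<^sub>R f c = 0" using assms(3)
        by (cases "c \<in> pos_quadrant") auto
    qed
    have fim: "(\<lambda>c. indicator pos_quadrant c *\<^sub>R f c) \<in> borel_measurable lborel"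
      using fi unfolding set_integrable_def by auto
    have "(LINT c:pos_quadrant|lborel. f c) = integral\<^sup>L lborel (\<lambda>c::real\<times>real. 0::real)"
      unfolding set_lebesgue_integral_def by (rule integral_cong_AE) (use fim ae in auto)
    then show False using f1 by simp
  qed
qed

lemma nc_le:
  assumes "pdf_pos_quadrant f" "\<forall>k\<in>{1..K}. 0 \<le> s k" "\<forall>k\<in>{1..K}. 0 \<le> t k"
    and "\<forall>c\<in>pos_quadrant. likelihood K r (fst c) (snd c) t \<le> likelihood K r (fst c) (snd c) s"
  shows "nc_likelihood K r f t \<le> nc_likelihood K r f s"
  unfolding nc_likelihood_def
proof (rule set_integral_mono[OF int_lik[OF assms(1,3)] int_lik[OF assms(1,2)]])
  fix c assume "c \<in> pos_quadrant"
  then show "likelihood K r (fst c) (snd c) t * f c \<le> likelihood K r (fst c) (snd c) s * f c"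
    using assms(1,4) unfolding pdf_pos_quadrant_def by (auto intro: mult_right_mono)
qed

lemma nc_lt:
  assumes "pdf_pos_quadrant f" "\<forall>k\<in>{1..K}. 0 \<le> s k" "\<forall>k\<in>{1..K}. 0 \<le> t k"
    and "\<forall>c\<in>pos_quadrant. likelihood K r (fst c) (snd c) t < likelihood K r (fst c) (snd c) s"
  shows "nc_likelihood K r f t < nc_likelihood K r f s"
proof -
  let ?d = "\<lambda>c. likelihood K r (fst c) (snd c) s - likelihood K r (fst c) (snd c) t"
  have i: "set_integrable lborel pos_quadrant (\<lambda>c. ?d c * f c)"
    using set_integral_diff(1)[OF int_lik[OF assms(1,2)] int_lik[OF assms(1,3)]]
    by (simp add: left_diff_distrib)
  have "0 < (LINT c:pos_quadrant|lborel. ?d c * f c)"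
    using strict_pos[OF assms(1) i] assms(4) by auto
  also have "(LINT c:pos_quadrant|lborel. ?d c * f c) = nc_likelihood K r f s - nc_likelihood K r f t"
    unfolding nc_likelihood_def
    using set_integral_diff(2)[OF int_lik[OF assms(1,2)] int_lik[OF assms(1,3)]]
    by (simp add: left_diff_distrib)
  finally show ?thesis by simp
qed



lemma argmax_lik_eq:
  assumes nn: "\<forall>s\<in>C. \<forall>k\<in>{1..K}. 0 \<le> s k" and sc: "\<forall>s\<in>C. \<forall>t\<in>C. samecomp {1..K} s t"
    and cl: "\<forall>s\<in>C. \<forall>i\<in>{1..K}. \<forall>j\<in>{1..K}. swp s i j \<in> C"
    and cs: "0 < cs" and cn: "0 < cn"
  shows "argmax_set C (likelihood K r cs cn) = {s\<in>C. conc {1..K} (\<lambda>k. real (r k)) s}"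
proof
  show "{s\<in>C. conc {1..K} (\<lambda>k. real (r k)) s} \<subseteq> argmax_set C (likelihood K r cs cn)"
    unfolding argmax_set_def using nn sc by (auto intro!: lik_le[OF cs cn])
  show "argmax_set C (likelihood K r cs cn) \<subseteq> {s\<in>C. conc {1..K} (\<lambda>k. real (r k)) s}"
  proof
    fix s assume s: "s \<in> argmax_set C (likelihood K r cs cn)"
    then have sC: "s \<in> C" by (simp add: argmax_set_def)
    have "conc {1..K} (\<lambda>k. real (r k)) s"
    proof (rule ccontr)
      assume "\<not> ?thesis"
      then obtain i j where ij: "i \<in> {1..K}" "j \<in> {1..K}" "real (r i) < real (r j)" "s j < s i"
        using not_conc by blast
      have "likelihood K r cs cn s < likelihood K r cs cn (swp s i j)"
        using lik_lt[OF cs cn _ ij] nn sC by blast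
      moreover have "swp s i j \<in> C" using cl sC ij by blast
      ultimately show False using s by (force simp: argmax_set_def)
    qed
    then show "s \<in> {s\<in>C. conc {1..K} (\<lambda>k. real (r k)) s}" using sC by simp
  qed
qed

lemma argmax_nc_eq:
  assumes nn: "\<forall>s\<in>C. \<forall>k\<in>{1..K}. 0 \<le> s k" and sc: "\<forall>s\<in>C. \<forall>t\<in>C. samecomp {1..K} s t"
    and cl: "\<forall>s\<in>C. \<forall>i\<in>{1..K}. \<forall>j\<in>{1..K}. swp s i j \<in> C"
    and f: "pdf_pos_quadrant f"
  shows "argmax_set C (nc_likelihood K r f) = {s\<in>C. conc {1..K} (\<lambda>k. real (r k)) s}"
proof
  show "{s\<in>C. conc {1..K} (\<lambda>k. real (r k)) s} \<subseteq> argmax_set C (nc_likelihood K r f)"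
  proof
    fix s assume s: "s \<in> {s\<in>C. conc {1..K} (\<lambda>k. real (r k)) s}"
    have "nc_likelihood K r f t \<le> nc_likelihood K r f s" if t: "t \<in> C" for t
    proof (rule nc_le[OF f])
      show "\<forall>k\<in>{1..K}. 0 \<le> s k" "\<forall>k\<in>{1..K}. 0 \<le> t k" using nn s t by auto
      show "\<forall>c\<in>pos_quadrant. likelihood K r (fst c) (snd c) t \<le> likelihood K r (fst c) (snd c) s"
        using nn sc s t by (auto simp: Q_iff intro!: lik_le)
    qed
    then show "s \<in> argmax_set C (nc_likelihood K r f)" using s by (auto simp: argmax_set_def)
  qed
  show "argmax_set C (nc_likelihood K r f) \<subseteq> {s\<in>C. conc {1..K} (\<lambda>k. real (r k)) s}"
  proof
    fix s assume s: "s \<in> argmax_set C (nc_likelihood K r f)"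
    then have sC: "s \<in> C" by (simp add: argmax_set_def)
    have "conc {1..K} (\<lambda>k. real (r k)) s"
    proof (rule ccontr)
      assume "\<not> ?thesis"
      then obtain i j where ij: "i \<in> {1..K}" "j \<in> {1..K}" "real (r i) < real (r j)" "s j < s i"
        using not_conc by blast
      have tC: "swp s i j \<in> C" using cl sC ij by blast
      have "nc_likelihood K r f s < nc_likelihood K r f (swp s i j)"
      proof (rule nc_lt[OF f])
        show "\<forall>k\<in>{1..K}. 0 \<le> swp s i j k" "\<forall>k\<in>{1..K}. 0 \<le> s k" using nn sC tC by auto
        show "\<forall>c\<in>pos_quadrant. likelihood K r (fst c) (snd c) s < likelihood K r (fst c) (snd c) (swp s i j)"
          using lik_lt[OF _ _ _ ij] nn sC by (auto simp: Q_iff)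
      qed
      then show False using s tC by (force simp: argmax_set_def)
    qed
    then show "s \<in> {s\<in>C. conc {1..K} (\<lambda>k. real (r k)) s}" using sC by simp
  qed
qed

lemma in_argmax_both:
  assumes nn: "\<forall>s\<in>C. \<forall>k\<in>{1..K}. 0 \<le> s k" and sc: "\<forall>s\<in>C. \<forall>t\<in>C. samecomp {1..K} s t"
    and sC: "s \<in> C" and co: "conc {1..K} (\<lambda>k. real (r k)) s"
  shows "(\<forall>cs>0. \<forall>cn>0. s \<in> argmax_set C (likelihood K r cs cn))
    \<and> (\<forall>f. pdf_pos_quadrant f \<longrightarrow> s \<in> argmax_set C (nc_likelihood K r f))"
proof (intro conjI allI impI)
  fix cs cn :: real assume "0 < cs" "0 < cn"
  then show "s \<in> argmax_set C (likelihood K r cs cn)"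
    unfolding argmax_set_def using nn sc sC co by (auto intro!: lik_le)
next
  fix f assume f: "pdf_pos_quadrant f"
  have "nc_likelihood K r f t \<le> nc_likelihood K r f s" if t: "t \<in> C" for t
  proof (rule nc_le[OF f])
    show "\<forall>k\<in>{1..K}. 0 \<le> s k" "\<forall>k\<in>{1..K}. 0 \<le> t k" using nn sC t by auto
    show "\<forall>c\<in>pos_quadrant. likelihood K r (fst c) (snd c) t \<le> likelihood K r (fst c) (snd c) s"
      using nn sc sC co t by (auto simp: Q_iff intro!: lik_le)
  qed
  then show "s \<in> argmax_set C (nc_likelihood K r f)" using sC by (auto simp: argmax_set_def)
qed

lemma samecomp_by_cards:
  assumes "finite I" "finite T" "\<forall>k\<in>I. s k \<in> T" "\<forall>k\<in>I. t k \<in> T"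
    and "\<forall>v\<in>T. card {k\<in>I. s k = v} = card {k\<in>I. t k = v}"
  shows "samecomp I s t"
  unfolding samecomp_def
proof
  fix \<phi> :: "real \<Rightarrow> real"
  have e: "(\<Sum>k\<in>I. \<phi> (u k)) = (\<Sum>v\<in>T. real (card {k\<in>I. u k = v}) * \<phi> v)"
    if "\<forall>k\<in>I. u k \<in> T" for u
  proof -
    have "(\<Sum>k\<in>I. \<phi> (u k)) = (\<Sum>v\<in>T. \<Sum>k\<in>{x\<in>I. u x = v}. \<phi> (u k))"
      using sum.group[OF assms(1,2), of u "\<lambda>k. \<phi> (u k)"] that by (metis image_subset_iff)
    also have "\<dots> = (\<Sum>v\<in>T. real (card {k\<in>I. u k = v}) * \<phi> v)"
    proof (rule sum.cong[OF refl])
      fix v assume "v \<in> T"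
      have "(\<Sum>k\<in>{x\<in>I. u x = v}. \<phi> (u k)) = (\<Sum>k\<in>{x\<in>I. u x = v}. \<phi> v)"
        by (rule sum.cong) auto
      then show "(\<Sum>k\<in>{x\<in>I. u x = v}. \<phi> (u k)) = real (card {k\<in>I. u k = v}) * \<phi> v" by simp
    qed
    finally show ?thesis .
  qed
  show "(\<Sum>k\<in>I. \<phi> (s k)) = (\<Sum>k\<in>I. \<phi> (t k))"
    unfolding e[OF assms(3)] e[OF assms(4)] using assms(5) by (intro sum.cong) auto
qed



lemma SCW_props:
  fixes eta :: "nat \<Rightarrow> real" and w :: "nat \<Rightarrow> nat"
  assumes L2: "L \<ge> 2" and eta0: "eta 0 = 0" and eta_mono: "strict_mono_on {..<L} eta"
  defines "C \<equiv> full_SCW_code eta L w" and "K \<equiv> code_length L w"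
  shows "\<forall>s\<in>C. \<forall>k\<in>{1..K}. 0 \<le> s k"
    and "\<forall>s\<in>C. \<forall>t\<in>C. samecomp {1..K} s t"
    and "\<forall>s\<in>C. \<forall>i\<in>{1..K}. \<forall>j\<in>{1..K}. swp s i j \<in> C"
proof -
  have eta_nn: "0 \<le> eta l" if "l < L" for l
  proof (cases "l = 0")
    case False
    then have "eta 0 < eta l" using eta_mono that by (intro strict_mono_onD[OF eta_mono]) auto
    then show ?thesis using eta0 by simp
  qed (simp add: eta0)
  have inj: "inj_on eta {..<L}" using eta_mono by (rule strict_mono_on_imp_inj_on)
  show "\<forall>s\<in>C. \<forall>k\<in>{1..K}. 0 \<le> s k"
    unfolding C_def K_def full_SCW_code_def using eta_nn by fastforce
  show sc: "\<forall>s\<in>C. \<forall>t\<in>C. samecomp {1..K} s t"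
  proof (intro ballI)
    fix s t assume s: "s \<in> C" and t: "t \<in> C"
    show "samecomp {1..K} s t"
    proof (rule samecomp_by_cards[where T = "eta ` {..<L}"])
      show "\<forall>k\<in>{1..K}. s k \<in> eta ` {..<L}" "\<forall>k\<in>{1..K}. t k \<in> eta ` {..<L}"
        using s t unfolding C_def K_def full_SCW_code_def by auto
      show "\<forall>v\<in>eta ` {..<L}. card {k \<in> {1..K}. s k = v} = card {k \<in> {1..K}. t k = v}"
        using s t unfolding C_def K_def full_SCW_code_def by auto
    qed auto
  qed
  show "\<forall>s\<in>C. \<forall>i\<in>{1..K}. \<forall>j\<in>{1..K}. swp s i j \<in> C"
  proof (intro ballI)
    fix s i j assume s: "s \<in> C" and i: "i \<in> {1..K}" and j: "j \<in> {1..K}"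
    have scs: "samecomp {1..K} s (swp s i j)" by (rule samecomp_swp) (use i j in auto)
    have c: "card {k\<in>{1..K}. swp s i j k = v} = card {k\<in>{1..K}. s k = v}" for v
      using samecomp_card[OF _ scs, of v] by simp
    show "swp s i j \<in> C"
      using s i j unfolding C_def full_SCW_code_def
      apply (simp only: mem_Collect_eq)
      apply (intro conjI)
      using c unfolding K_def by (auto simp: swp_def)
  qed
qed

lemma CW_props:
  fixes K \<omega> :: nat
  defines "C \<equiv> full_CW_code K \<omega>"
  shows "\<forall>s\<in>C. \<forall>k\<in>{1..K}. 0 \<le> s k"
    and "\<forall>s\<in>C. \<forall>t\<in>C. samecomp {1..K} s t"
proof -
  show "\<forall>s\<in>C. \<forall>k\<in>{1..K}. 0 \<le> s k"
    unfolding C_def full_CW_code_def by fastforce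
  have c0: "card {k\<in>{1..K}. s k = 0} = K - \<omega>" if s: "s \<in> C" for s
  proof -
    have "{k\<in>{1..K}. s k = 0} = {1..K} - {k\<in>{1..K}. s k = 1}"
      using s unfolding C_def full_CW_code_def by fastforce
    moreover have "card {k\<in>{1..K}. s k = 1} = \<omega>" using s unfolding C_def full_CW_code_def by simp
    moreover have "card ({1..K} - {k\<in>{1..K}. s k = 1}) = card {1..K} - card {k\<in>{1..K}. s k = 1}"
      by (rule card_Diff_subset) auto
    ultimately show ?thesis by simp
  qed
  show "\<forall>s\<in>C. \<forall>t\<in>C. samecomp {1..K} s t"
  proof (intro ballI)
    fix s t assume s: "s \<in> C" and t: "t \<in> C"
    show "samecomp {1..K} s t"
    proof (rule samecomp_by_cards[where T = "{0, 1}"])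
      show "\<forall>k\<in>{1..K}. s k \<in> {0, 1}" "\<forall>k\<in>{1..K}. t k \<in> {0, 1}"
        using s t unfolding C_def full_CW_code_def by auto
      show "\<forall>v\<in>{0, 1}. card {k \<in> {1..K}. s k = v} = card {k \<in> {1..K}. t k = v}"
        using s t c0[OF s] c0[OF t] unfolding C_def full_CW_code_def by auto
    qed auto
  qed
qed



lemma S_mono: "l \<le> l' \<Longrightarrow> (\<Sum>i<l. w i) \<le> (\<Sum>i<l'. (w::nat\<Rightarrow>nat) i)"
  by (rule sum_mono2) auto

lemma block_ex:
  fixes w :: "nat \<Rightarrow> nat"
  assumes "0 < L" "1 \<le> j" "j \<le> (\<Sum>i<L. w i)"
  shows "\<exists>l<L. (\<Sum>i<l. w i) < j \<and> j \<le> (\<Sum>i<Suc l. w i)"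
proof -
  define l where "l = (LEAST l. j \<le> (\<Sum>i<Suc l. w i))"
  have ex: "j \<le> (\<Sum>i<Suc (L - 1). w i)" using assms by simp
  have l1: "j \<le> (\<Sum>i<Suc l. w i)" unfolding l_def by (rule LeastI[of "\<lambda>l. j \<le> (\<Sum>i<Suc l. w i)", OF ex])
  have "l \<le> L - 1" unfolding l_def by (rule Least_le[of "\<lambda>l. j \<le> (\<Sum>i<Suc l. w i)", OF ex])
  then have lL: "l < L" using assms by simp
  have "(\<Sum>i<l. w i) < j"
  proof (cases l)
    case 0 then show ?thesis using assms by simp
  next
    case (Suc m)
    have "\<not> j \<le> (\<Sum>i<Suc m. w i)" using not_less_Least[of m "\<lambda>l. j \<le> (\<Sum>i<Suc l. w i)"] Suc
      unfolding l_def by simp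
    then show ?thesis using Suc by simp
  qed
  then show ?thesis using lL l1 by blast
qed

lemma block_uniq:
  fixes w :: "nat \<Rightarrow> nat"
  assumes "(\<Sum>i<l. w i) < j" "j \<le> (\<Sum>i<Suc l. w i)" "(\<Sum>i<l'. w i) < j" "j \<le> (\<Sum>i<Suc l'. w i)"
  shows "l = l'"
proof (rule ccontr)
  assume "l \<noteq> l'"
  then consider "l < l'" | "l' < l" by linarith
  then show False
  proof cases
    case 1 then have "(\<Sum>i<Suc l. w i) \<le> (\<Sum>i<l'. w i)" by (intro S_mono) simp
    then show False using assms by linarith
  next
    case 2 then have "(\<Sum>i<Suc l'. w i) \<le> (\<Sum>i<l. w i)" by (intro S_mono) simp
    then show False using assms by linarith
  qed
qed

lemma sorted_codeword:
  fixes eta :: "nat \<Rightarrow> real" and w :: "nat \<Rightarrow> nat" and r :: "nat \<Rightarrow> nat"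
  assumes L2: "L \<ge> 2" and eta_mono: "strict_mono_on {..<L} eta"
    and bij: "bij_betw \<pi> {1..code_length L w} {1..code_length L w}"
    and srt: "\<forall>i j. 1 \<le> i \<and> i \<le> j \<and> j \<le> code_length L w \<longrightarrow> r (\<pi> i) \<le> r (\<pi> j)"
    and hs0: "\<forall>j\<in>{1..code_length L w}. \<forall>l<L.
                    (\<Sum>l'<l. w l') < j \<and> j \<le> (\<Sum>l'\<le>l. w l') \<longrightarrow> s (\<pi> j) = eta l"
    and out: "\<forall>k. k \<notin> {1..code_length L w} \<longrightarrow> s k = 0"
  shows "s \<in> full_SCW_code eta L w \<and> conc {1..code_length L w} (\<lambda>k. real (r k)) s"
proof -
  define K where "K = code_length L w"
  have KS: "K = (\<Sum>i<L. w i)" by (simp add: K_def code_length_def)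
  have hs: "\<And>j l. j \<in> {1..K} \<Longrightarrow> l < L \<Longrightarrow> (\<Sum>i<l. w i) < j \<Longrightarrow> j \<le> (\<Sum>i<Suc l. w i) \<Longrightarrow> s (\<pi> j) = eta l"
    using hs0 unfolding K_def by (simp add: lessThan_Suc_atMost)
  have inj: "inj_on eta {..<L}" using eta_mono by (rule strict_mono_on_imp_inj_on)
  have img: "\<pi> ` {1..K} = {1..K}" and injpi: "inj_on \<pi> {1..K}"
    using bij unfolding K_def bij_betw_def by auto
  have blk: "\<exists>l<L. (\<Sum>i<l. w i) < j \<and> j \<le> (\<Sum>i<Suc l. w i)" if "j \<in> {1..K}" for j
    using block_ex[of L j w] that L2 KS by auto
  have vals: "\<forall>k\<in>{1..K}. s k \<in> eta ` {..<L}"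
  proof
    fix k assume k: "k \<in> {1..K}"
    then obtain j where j: "j \<in> {1..K}" "k = \<pi> j" using img by blast
    then obtain l where "l < L" "(\<Sum>i<l. w i) < j" "j \<le> (\<Sum>i<Suc l. w i)" using blk by blast
    then show "s k \<in> eta ` {..<L}" using hs[OF j(1)] j(2) by auto
  qed
  have cards: "card {k\<in>{1..K}. s k = eta l} = w l" if l: "l < L" for l
  proof -
    let ?B = "{(\<Sum>i<l. w i)<..(\<Sum>i<Suc l. w i)}"
    have BI: "?B \<subseteq> {1..K}"
    proof
      fix j assume "j \<in> ?B"
      moreover have "(\<Sum>i<Suc l. w i) \<le> K" unfolding KS using l by (intro S_mono) simp
      ultimately show "j \<in> {1..K}" by auto
    qed
    have "{k\<in>{1..K}. s k = eta l} = \<pi> ` ?B"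
    proof
      show "\<pi> ` ?B \<subseteq> {k\<in>{1..K}. s k = eta l}"
      proof
        fix k assume "k \<in> \<pi> ` ?B"
        then obtain j where j: "j \<in> ?B" "k = \<pi> j" by blast
        then have "j \<in> {1..K}" using BI by auto
        then show "k \<in> {k\<in>{1..K}. s k = eta l}" using hs[of j l] j l img by auto
      qed
      show "{k\<in>{1..K}. s k = eta l} \<subseteq> \<pi> ` ?B"
      proof
        fix k assume k: "k \<in> {k\<in>{1..K}. s k = eta l}"
        then obtain j where j: "j \<in> {1..K}" "k = \<pi> j" using img by blast
        then obtain l' where l': "l' < L" "(\<Sum>i<l'. w i) < j" "j \<le> (\<Sum>i<Suc l'. w i)" using blk by blast
        have "eta l' = eta l" using hs[OF j(1) l'] j(2) k by simp
        then have "l' = l" using inj l l'(1) by (auto dest: inj_onD)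
        then show "k \<in> \<pi> ` ?B" using j l' by auto
      qed
    qed
    moreover have "card (\<pi> ` ?B) = card ?B"
      by (rule card_image) (rule inj_on_subset[OF injpi BI])
    ultimately show ?thesis by simp
  qed
  have inC: "s \<in> full_SCW_code eta L w"
    unfolding full_SCW_code_def using out vals cards unfolding K_def by auto
  have co: "conc {1..K} (\<lambda>k. real (r k)) s"
    unfolding conc_def
  proof (intro ballI impI)
    fix i j assume i: "i \<in> {1..K}" and j: "j \<in> {1..K}" and rij: "real (r i) < real (r j)"
    obtain a where a: "a \<in> {1..K}" "i = \<pi> a" using img i by blast
    obtain b where b: "b \<in> {1..K}" "j = \<pi> b" using img j by blast
    have ab: "a < b"
    proof (rule ccontr)
      assume "\<not> a < b"
      then have "r (\<pi> b) \<le> r (\<pi> a)" using srt a b unfolding K_def by auto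
      then show False using rij a b by simp
    qed
    obtain la where la: "la < L" "(\<Sum>i<la. w i) < a" "a \<le> (\<Sum>i<Suc la. w i)" using blk a(1) by blast
    obtain lb where lb: "lb < L" "(\<Sum>i<lb. w i) < b" "b \<le> (\<Sum>i<Suc lb. w i)" using blk b(1) by blast
    have "la \<le> lb"
    proof (rule ccontr)
      assume "\<not> la \<le> lb"
      then have "(\<Sum>i<Suc lb. w i) \<le> (\<Sum>i<la. w i)" by (intro S_mono) simp
      then show False using la lb ab by linarith
    qed
    then have "eta la \<le> eta lb"
      using strict_mono_onD[OF eta_mono, of la lb] la(1) lb(1) by (cases "la = lb") auto
    then show "s i \<le> s j" using hs[OF a(1) la] hs[OF b(1) lb] a b by simp
  qed
  show ?thesis using inC co unfolding K_def by simp
qed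


theorem theorem1:
  fixes eta :: "nat \<Rightarrow> real" and L :: nat and w :: "nat \<Rightarrow> nat" and r :: "nat \<Rightarrow> nat"
  assumes L2: "L \<ge> 2"
    and eta0: "eta 0 = 0"
    and eta_mono: "strict_mono_on {..<L} eta"
    and eta_last: "eta (L - 1) = 1"
  shows
    "(\<exists>A. (\<forall>cs>0. \<forall>cn>0.
              argmax_set (full_SCW_code eta L w) (likelihood (code_length L w) r cs cn) = A)
        \<and> (\<forall>f. pdf_pos_quadrant f \<longrightarrow>
              argmax_set (full_SCW_code eta L w) (nc_likelihood (code_length L w) r f) = A)
        \<and> (\<forall>\<pi> s. bij_betw \<pi> {1..code_length L w} {1..code_length L w}
              \<and> (\<forall>i j. 1 \<le> i \<and> i \<le> j \<and> j \<le> code_length L w \<longrightarrow> r (\<pi> i) \<le> r (\<pi> j))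
              \<and> (\<forall>j\<in>{1..code_length L w}. \<forall>l<L.
                    (\<Sum>l'<l. w l') < j \<and> j \<le> (\<Sum>l'\<le>l. w l') \<longrightarrow> s (\<pi> j) = eta l)
              \<and> (\<forall>k. k \<notin> {1..code_length L w} \<longrightarrow> s k = 0)
              \<longrightarrow> s \<in> A))
     \<and> (\<forall>(K::nat) (\<omega>::nat) (r'::nat \<Rightarrow> nat) s T.
          s \<in> full_CW_code K \<omega>
          \<and> T \<subseteq> {1..K} \<and> card T = \<omega>
          \<and> (\<forall>i\<in>T. \<forall>j\<in>{1..K} - T. r' j \<le> r' i)
          \<and> {k\<in>{1..K}. s k = 1} = T
          \<longrightarrow> (\<forall>cs>0. \<forall>cn>0. s \<in> argmax_set (full_CW_code K \<omega>) (likelihood K r' cs cn))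
            \<and> (\<forall>f. pdf_pos_quadrant f \<longrightarrow> s \<in> argmax_set (full_CW_code K \<omega>) (nc_likelihood K r' f)))"
proof -
  let ?C = "full_SCW_code eta L w" and ?K = "code_length L w"
  note P = SCW_props[OF L2 eta0 eta_mono, of w]
  define A where "A = {s\<in>?C. conc {1..?K} (\<lambda>k. real (r k)) s}"
  have 1: "\<forall>cs>0. \<forall>cn>0. argmax_set ?C (likelihood ?K r cs cn) = A"
    unfolding A_def using argmax_lik_eq[OF P(1) P(2) P(3)] by blast
  have 2: "\<forall>f. pdf_pos_quadrant f \<longrightarrow> argmax_set ?C (nc_likelihood ?K r f) = A"
    unfolding A_def using argmax_nc_eq[OF P(1) P(2) P(3)] by blast
  have 3: "\<forall>\<pi> s. bij_betw \<pi> {1..code_length L w} {1..code_length L w}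
              \<and> (\<forall>i j. 1 \<le> i \<and> i \<le> j \<and> j \<le> code_length L w \<longrightarrow> r (\<pi> i) \<le> r (\<pi> j))
              \<and> (\<forall>j\<in>{1..code_length L w}. \<forall>l<L.
                    (\<Sum>l'<l. w l') < j \<and> j \<le> (\<Sum>l'\<le>l. w l') \<longrightarrow> s (\<pi> j) = eta l)
              \<and> (\<forall>k. k \<notin> {1..code_length L w} \<longrightarrow> s k = 0)
              \<longrightarrow> s \<in> A"
    unfolding A_def using sorted_codeword[OF L2 eta_mono] by blast
  have 4: "\<forall>(K::nat) (\<omega>::nat) (r'::nat \<Rightarrow> nat) s T.
          s \<in> full_CW_code K \<omega>
          \<and> T \<subseteq> {1..K} \<and> card T = \<omega>
          \<and> (\<forall>i\<in>T. \<forall>j\<in>{1..K} - T. r' j \<le> r' i)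
          \<and> {k\<in>{1..K}. s k = 1} = T
          \<longrightarrow> (\<forall>cs>0. \<forall>cn>0. s \<in> argmax_set (full_CW_code K \<omega>) (likelihood K r' cs cn))
            \<and> (\<forall>f. pdf_pos_quadrant f \<longrightarrow> s \<in> argmax_set (full_CW_code K \<omega>) (nc_likelihood K r' f))"
  proof (intro allI impI)
    fix K \<omega> :: nat and r' :: "nat \<Rightarrow> nat" and s T
    assume h: "s \<in> full_CW_code K \<omega> \<and> T \<subseteq> {1..K} \<and> card T = \<omega>
          \<and> (\<forall>i\<in>T. \<forall>j\<in>{1..K} - T. r' j \<le> r' i) \<and> {k\<in>{1..K}. s k = 1} = T"
    have vals: "\<forall>k\<in>{1..K}. s k = 0 \<or> s k = 1" using h unfolding full_CW_code_def by auto
    have co: "conc {1..K} (\<lambda>k. real (r' k)) s"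
      unfolding conc_def
    proof (intro ballI impI)
      fix i j assume i: "i \<in> {1..K}" and j: "j \<in> {1..K}" and rij: "real (r' i) < real (r' j)"
      show "s i \<le> s j"
      proof (cases "s i = 1 \<and> s j = 0")
        case True
        then have "i \<in> T" "j \<in> {1..K} - T" using h i j by auto
        then have "r' j \<le> r' i" using h by blast
        then show ?thesis using rij by simp
      next
        case False
        have "s i = 0 \<or> s i = 1" "s j = 0 \<or> s j = 1" using vals i j by auto
        then show ?thesis using False by auto
      qed
    qed
    show "(\<forall>cs>0. \<forall>cn>0. s \<in> argmax_set (full_CW_code K \<omega>) (likelihood K r' cs cn))
            \<and> (\<forall>f. pdf_pos_quadrant f \<longrightarrow> s \<in> argmax_set (full_CW_code K \<omega>) (nc_likelihood K r' f))"
      by (rule in_argmax_both[OF CW_props(1) CW_props(2) _ co]) (use h in blast)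
  qed
  show ?thesis using 1 2 3 4 by blast
qed

end
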